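(* Let $\mathcal U$ be a fine Ramsey ultrafilter on $\mathbb N^{<\omega}$. Then the condition $$X\approx Y\iff\{F\in\mathbb N^{<\omega}:S_X(\mathbf x_F)=S_Y(\mathbf x_F)\}\in\mathcal U\qquad(X,Y\in\mathbb W)$$ defines a natural equinumerosity $\approx$ on $\mathbb W$. The corresponding set of numerosities $\mathbb N^{\mathbb N^{<\omega}}/\mathcal U$ is isomorphic to the ultrapower $\mathbb N^{\mathbb N}/\sigma\mathcal U$, where $\sigma:\mathbb N^{<\omega}\to\mathbb N$ is $\sigma(F)=|F|$ and $\sigma\mathcal U=\{A\subseteq\mathbb N:\sigma^{-1}[A]\in\mathcal U\}$. This equinumerosity is characterized by $\mathcal U$-congruences, i.e. for $X,Y\in\mathbb W$, $X\approx Y$ iff there exists a $\mathcal U$-congruence between $X$ and $Y$. Finally, it becomes asymptotic after a suitable reordering of $\mathbb N$: there is a permutation $\pi$ of $\mathbb N$ such that, writing $G_m=\pi[\{0,\dots,m\}]$, for every $S$ in the gauge ideal $\mathfrak I=\{S\in\mathcal R:\ \{F: S(\mathbf x_F)=0\}\in\mathcal U\}$ and every $k$ there is $m$ with $\{0,\dots,k\}\subseteq G_m$ and $S(\mathbf x_{G_m})=0$.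
   Context: Let $\mathbb N=\{0,1,2,\dots\}$, $\mathbb N^{<\omega}$ the set of finite subsets of $\mathbb N$. $\mathbb{W}$ is the family of finitary point sets: sets $A\subseteq\bigcup_{k\ge1}\mathbb N^k$ of finite tuples of natural numbers such that for every $n$ there is $h$ with $A\cap\{0,\dots,n\}^k=\emptyset$ for all $k>h$. Cartesian products are identified with concatenations; $\{n\}$ is the set whose only element is the 1-tuple $(n)$; $A,B\in\mathbb W$ are multipliable if distinct pairs $(a,b)\in A\times B$ have distinct concatenations. Given an equivalence relation $\approx$ on $\mathbb W$, $A\succ B$ (equivalently $B\prec A$) means there exist $A',B'\in\mathbb W$ with $B'\subsetneq A'$, $A\approx A'$, $B\approx B'$. An equinumerosity is an equivalence relation on $\mathbb W$ such that for all $A,B\in\mathbb W$: (AP) $A\approx B$ iff $A\setminus B\approx B\setminus A$; (ZP) exactly one of $A\approx B$, $A\succ B$, $A\prec B$ holds; (TP) if $T$ is injective on $A$ and $T(a)$ is a permutation of the coordinates of $a$ for every $a\in A$, then $A\approx T[A]$; (UP) $A\times\{n\}\approx A$ for all $n$; (PP) if $A,B$ are multipliable, $A',B'$ are multipliable, $A\approx A'$, $B\approx B'$, then $A\times B\approx A'\times B'$. It is natural if whenever $T$ is injective on $X\in\mathbb W$ and the set of components of $T(x)$ equals that of $x$ for all $x\in X$, then $X\approx T[X]$. Series: indeterminates $t_0,t_1,\dots$; $\mathbf A$ the eventually zero sequences $\mathbf a$ of non-negative integers; $t^{\mathbf a}=\prod_it_i^{a_i}$; $\mathcal R$ is the ring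 of formal series $S=\sum n_{\mathbf a}t^{\mathbf a}$ ($n_{\mathbf a}\in\mathbb Z$) for which there are $d_n\in\mathbb N$ with $n_{\mathbf a}=0$ whenever $a_n>d_n$ for some $n$, and $b\in\mathbb N$ with $|n_{\mathbf a}|\le b(\sum_ia_i)!/\prod_ia_i!$. For a tuple $x=(x_1,\dots,x_d)$, $t_x=t^{\mathbf a}$ with $a_i=|\{j:x_j=i\}|$; $S_X=\sum_{x\in X}t_x$, $S_\emptyset=0$. $S(\mathbf x)$ is the value of $S$ when $x_n$ is assigned to $t_n$. For $F\in\mathbb N^{<\omega}$, $\mathbf x_F$ is the $0$-$1$ sequence with $\mathbf x_F(n)=1$ iff $n\in F$; note $S_X(\mathbf x_F)=|X_F|$ where $X_F=X\cap\bigcup_{n}F^n$. An ultrafilter $\mathcal U$ on $\mathbb N^{<\omega}$ is fine if it contains every $\{F:n\in F\}$, $n\in\mathbb N$; it is Ramsey if for every partition of the set of 2-element subsets of $\mathbb N^{<\omega}$ into two classes there is a set in $\mathcal U$ all of whose 2-element subsets lie in the same class. For $X,Y\in\mathbb W$, a $\mathcal U$-congruence between $X$ and $Y$ is an injective map $\tau:X\to Y$ such that $\{F\in\mathbb N^{<\omega}:\tau[X_F]=Y_F\}\in\mathcal U$. *)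

theory Defs
  imports Main "HOL-Library.Multiset"
begin

text \<open>Finite tuples of naturals are lists; the set N^{<omega} of finite subsets of N is
  represented by the finite members of type nat set.\<close>

definition W :: "nat list set set" where
  "W = {A. (\<forall>a\<in>A. a \<noteq> []) \<and>
           (\<forall>n. \<exists>h. \<forall>a\<in>A. set a \<subseteq> {0..n} \<longrightarrow> length a \<le> h)}"

definition cart :: "nat list set \<Rightarrow> nat list set \<Rightarrow> nat list set" where
  "cart A B = {a @ b | a b. a \<in> A \<and> b \<in> B}"

definition sing :: "nat \<Rightarrow> nat list set" where
  "sing n = {[n]}"

definition multipliable :: "nat list set \<Rightarrow> nat list set \<Rightarrow> bool" where
  "multipliable A B \<longleftrightarrow> inj_on (\<lambda>(a, b). a @ b) (A \<times> B)"

definition num_gt :: "(nat list set \<Rightarrow> nat list set \<Rightarrow> bool) \<Rightarrow> nat list set \<Rightarrow> nat list set \<Rightarrow> bool" where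
  "num_gt R A B \<longleftrightarrow> (\<exists>A' B'. A' \<in> W \<and> B' \<in> W \<and> B' \<subset> A' \<and> R A A' \<and> R B B')"

definition equinumerosity :: "(nat list set \<Rightarrow> nat list set \<Rightarrow> bool) \<Rightarrow> bool" where
  "equinumerosity R \<longleftrightarrow>
     \<comment> \<open>equivalence relation on W\<close>
     (\<forall>A\<in>W. R A A) \<and>
     (\<forall>A\<in>W. \<forall>B\<in>W. R A B \<longrightarrow> R B A) \<and>
     (\<forall>A\<in>W. \<forall>B\<in>W. \<forall>C\<in>W. R A B \<longrightarrow> R B C \<longrightarrow> R A C) \<and>
     \<comment> \<open>(AP)\<close>
     (\<forall>A\<in>W. \<forall>B\<in>W. R A B \<longleftrightarrow> R (A - B) (B - A)) \<and>
     \<comment> \<open>(ZP)\<close>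
     (\<forall>A\<in>W. \<forall>B\<in>W.
        (R A B \<and> \<not> num_gt R A B \<and> \<not> num_gt R B A) \<or>
        (\<not> R A B \<and> num_gt R A B \<and> \<not> num_gt R B A) \<or>
        (\<not> R A B \<and> \<not> num_gt R A B \<and> num_gt R B A)) \<and>
     \<comment> \<open>(TP)\<close>
     (\<forall>A\<in>W. \<forall>T. inj_on T A \<and> (\<forall>a\<in>A. mset (T a) = mset a) \<longrightarrow> R A (T ` A)) \<and>
     \<comment> \<open>(UP)\<close>
     (\<forall>A\<in>W. \<forall>n. R (cart A (sing n)) A) \<and>
     \<comment> \<open>(PP)\<close>
     (\<forall>A\<in>W. \<forall>B\<in>W. \<forall>A'\<in>W. \<forall>B'\<in>W.
        multipliable A B \<and> multipliable A' B' \<and> R A A' \<and> R B B' \<longrightarrow>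
        R (cart A B) (cart A' B'))"

definition natural :: "(nat list set \<Rightarrow> nat list set \<Rightarrow> bool) \<Rightarrow> bool" where
  "natural R \<longleftrightarrow>
     (\<forall>X\<in>W. \<forall>T. inj_on T X \<and> (\<forall>x\<in>X. set (T x) = set x) \<longrightarrow> R X (T ` X))"

text \<open>A series is its coefficient function on exponent sequences a :: nat => nat;
  the index set A consists of the eventually zero sequences.\<close>

type_synonym series = "(nat \<Rightarrow> nat) \<Rightarrow> int"

definition supp :: "(nat \<Rightarrow> nat) \<Rightarrow> nat set" where
  "supp a = {i. a i \<noteq> 0}"

definition multinom :: "(nat \<Rightarrow> nat) \<Rightarrow> nat" where
  "multinom a = fact (\<Sum>i\<in>supp a. a i) div (\<Prod>i\<in>supp a. fact (a i))"

definition R_ring :: "series set" where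
  "R_ring = {S. (\<forall>a. \<not> finite (supp a) \<longrightarrow> S a = 0) \<and>
                (\<exists>d::nat \<Rightarrow> nat. \<forall>a. (\<exists>n. a n > d n) \<longrightarrow> S a = 0) \<and>
                (\<exists>b::nat. \<forall>a. finite (supp a) \<longrightarrow> \<bar>S a\<bar> \<le> int (b * multinom a))}"

definition mon_val :: "(nat \<Rightarrow> nat) \<Rightarrow> (nat \<Rightarrow> int) \<Rightarrow> int" where
  "mon_val a x = (\<Prod>i\<in>supp a. x i ^ a i)"

text \<open>Value S(x): sum of the nonzero terms (used only at 0-1 sequences x_F, where it is
  a finite sum for S in R).\<close>
definition series_val :: "series \<Rightarrow> (nat \<Rightarrow> int) \<Rightarrow> int" where
  "series_val S x = (\<Sum>a\<in>{a. finite (supp a) \<and> S a * mon_val a x \<noteq> 0}. S a * mon_val a x)"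

definition xF :: "nat set \<Rightarrow> nat \<Rightarrow> int" where
  "xF F n = (if n \<in> F then 1 else 0)"

definition t_exp :: "nat list \<Rightarrow> nat \<Rightarrow> nat" where
  "t_exp x i = count (mset x) i"

definition S_of :: "nat list set \<Rightarrow> series" where
  "S_of X a = int (card {x\<in>X. t_exp x = a})"

definition ultrafilter_on :: "'a set \<Rightarrow> 'a set set \<Rightarrow> bool" where
  "ultrafilter_on I U \<longleftrightarrow>
     (\<forall>A\<in>U. A \<subseteq> I) \<and> I \<in> U \<and> {} \<notin> U \<and>
     (\<forall>A\<in>U. \<forall>B\<in>U. A \<inter> B \<in> U) \<and>
     (\<forall>A\<in>U. \<forall>B. A \<subseteq> B \<and> B \<subseteq> I \<longrightarrow> B \<in> U) \<and>
     (\<forall>A. A \<subseteq> I \<longrightarrow> A \<in> U \<or> I - A \<in> U)"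

definition Fin :: "nat set set" where
  "Fin = {F. finite F}"

definition fine :: "nat set set set \<Rightarrow> bool" where
  "fine U \<longleftrightarrow> (\<forall>n. {F\<in>Fin. n \<in> F} \<in> U)"

definition ramsey :: "nat set set set \<Rightarrow> bool" where
  "ramsey U \<longleftrightarrow>
     (\<forall>P :: nat set set \<Rightarrow> bool. \<exists>H\<in>U.
        (\<forall>F\<in>H. \<forall>G\<in>H. F \<noteq> G \<longrightarrow> P {F, G}) \<or>
        (\<forall>F\<in>H. \<forall>G\<in>H. F \<noteq> G \<longrightarrow> \<not> P {F, G}))"

definition restr :: "nat list set \<Rightarrow> nat set \<Rightarrow> nat list set" where
  "restr X F = {x\<in>X. set x \<subseteq> F}"

definition U_congruence :: "nat set set set \<Rightarrow> nat list set \<Rightarrow> nat list set \<Rightarrow> (nat list \<Rightarrow> nat list) \<Rightarrow> bool" where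
  "U_congruence U X Y \<tau> \<longleftrightarrow>
     \<tau> ` X \<subseteq> Y \<and> inj_on \<tau> X \<and> {F\<in>Fin. \<tau> ` restr X F = restr Y F} \<in> U"

definition U_eq :: "nat set set set \<Rightarrow> nat list set \<Rightarrow> nat list set \<Rightarrow> bool" where
  "U_eq U X Y \<longleftrightarrow> {F\<in>Fin. series_val (S_of X) (xF F) = series_val (S_of Y) (xF F)} \<in> U"

definition upw_eq :: "nat set set set \<Rightarrow> (nat set \<Rightarrow> nat) \<Rightarrow> (nat set \<Rightarrow> nat) \<Rightarrow> bool" where
  "upw_eq U f g \<longleftrightarrow> {F\<in>Fin. f F = g F} \<in> U"

definition upw_le :: "nat set set set \<Rightarrow> (nat set \<Rightarrow> nat) \<Rightarrow> (nat set \<Rightarrow> nat) \<Rightarrow> bool" where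
  "upw_le U f g \<longleftrightarrow> {F\<in>Fin. f F \<le> g F} \<in> U"

definition sigmaU :: "nat set set set \<Rightarrow> nat set set" where
  "sigmaU U = {A. {F\<in>Fin. card F \<in> A} \<in> U}"

definition upwN_eq :: "nat set set \<Rightarrow> (nat \<Rightarrow> nat) \<Rightarrow> (nat \<Rightarrow> nat) \<Rightarrow> bool" where
  "upwN_eq V h k \<longleftrightarrow> {n. h n = k n} \<in> V"

definition upwN_le :: "nat set set \<Rightarrow> (nat \<Rightarrow> nat) \<Rightarrow> (nat \<Rightarrow> nat) \<Rightarrow> bool" where
  "upwN_le V h k \<longleftrightarrow> {n. h n \<le> k n} \<in> V"

text \<open>An isomorphism of ordered semirings N^{N^{<omega}}/U -> N^N/V, given by a
  representative-level map that is well defined, injective, surjective on classes and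
  respects +, *, <=.\<close>
definition ultrapowers_iso :: "nat set set set \<Rightarrow> nat set set \<Rightarrow> ((nat set \<Rightarrow> nat) \<Rightarrow> (nat \<Rightarrow> nat)) \<Rightarrow> bool" where
  "ultrapowers_iso U V \<Phi> \<longleftrightarrow>
     (\<forall>f g. upw_eq U f g \<longleftrightarrow> upwN_eq V (\<Phi> f) (\<Phi> g)) \<and>
     (\<forall>h. \<exists>f. upwN_eq V (\<Phi> f) h) \<and>
     (\<forall>f g. upwN_eq V (\<Phi> (\<lambda>F. f F + g F)) (\<lambda>n. \<Phi> f n + \<Phi> g n)) \<and>
     (\<forall>f g. upwN_eq V (\<Phi> (\<lambda>F. f F * g F)) (\<lambda>n. \<Phi> f n * \<Phi> g n)) \<and>
     (\<forall>f g. upw_le U f g \<longleftrightarrow> upwN_le V (\<Phi> f) (\<Phi> g))"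

definition gauge_ideal :: "nat set set set \<Rightarrow> series set" where
  "gauge_ideal U = {S\<in>R_ring. {F\<in>Fin. series_val S (xF F) = 0} \<in> U}"

end

theory Submission
  imports Defs "HOL-Library.Infinite_Set"
begin

section \<open>Basic facts on W and evaluation\<close>

lemma W_finite_restr:
  assumes "X \<in> W" "finite F"
  shows "finite (restr X F)"
proof -
  define n where "n = Max F"
  have n: "F \<subseteq> {0..n}"
    using assms(2) unfolding n_def by (auto intro: Max_ge)
  obtain h where h: "\<forall>a\<in>X. set a \<subseteq> {0..n} \<longrightarrow> length a \<le> h"
    using assms(1) unfolding W_def by blast
  have "restr X F \<subseteq> {xs. set xs \<subseteq> {0..n} \<and> length xs \<le> h}"
    using n h unfolding restr_def by auto
  moreover have "finite {xs. set xs \<subseteq> {0..n::nat} \<and> length xs \<le> h}"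
    by (rule finite_lists_length_le) simp
  ultimately show ?thesis by (rule finite_subset)
qed

lemma t_exp_eq: "t_exp x = count (mset x)"
  by (rule ext) (simp add: t_exp_def)

lemma supp_t_exp: "supp (t_exp x) = set x"
  by (auto simp: supp_def t_exp_eq)

lemma t_exp_set: "t_exp x = t_exp y \<Longrightarrow> set x = set y"
  by (metis supp_t_exp)

lemma mon_val_xF:
  assumes "finite (supp a)"
  shows "mon_val a (xF F) = (if supp a \<subseteq> F then 1 else 0)"
proof (cases "supp a \<subseteq> F")
  case True
  then show ?thesis unfolding mon_val_def by (auto simp: xF_def intro!: prod.neutral)
next
  case False
  then obtain i where i: "i \<in> supp a" "i \<notin> F" by auto
  then have "a i \<noteq> 0" by (simp add: supp_def)
  then have "xF F i ^ a i = 0" using i by (simp add: xF_def)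
  then show ?thesis using False i assms unfolding mon_val_def
    by (simp add: prod_zero) blast
qed

lemma series_val_S_of:
  assumes "X \<in> W" "finite F"
  shows "series_val (S_of X) (xF F) = int (card (restr X F))"
proof -
  let ?R = "restr X F"
  have fR: "finite ?R" using W_finite_restr[OF assms] .
  have fib: "{y\<in>X. t_exp y = t_exp x} = {y\<in>?R. t_exp y = t_exp x}" if "x \<in> ?R" for x
    using that unfolding restr_def by (auto dest: t_exp_set)
  have I: "{a. finite (supp a) \<and> S_of X a * mon_val a (xF F) \<noteq> 0} = t_exp ` ?R"
  proof
    show "{a. finite (supp a) \<and> S_of X a * mon_val a (xF F) \<noteq> 0} \<subseteq> t_exp ` ?R"
    proof
      fix a assume a: "a \<in> {a. finite (supp a) \<and> S_of X a * mon_val a (xF F) \<noteq> 0}"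
      then have fa: "finite (supp a)" and nz: "S_of X a \<noteq> 0" "mon_val a (xF F) \<noteq> 0" by auto
      have "{x\<in>X. t_exp x = a} \<noteq> {}" using nz(1) unfolding S_of_def by (metis card.empty of_nat_0)
      then obtain x where x: "x \<in> X" "t_exp x = a" by blast
      from nz(2) fa have "supp a \<subseteq> F" by (simp add: mon_val_xF split: if_splits)
      then have "set x \<subseteq> F" using x supp_t_exp by metis
      then show "a \<in> t_exp ` ?R" using x unfolding restr_def by auto
    qed
  next
    show "t_exp ` ?R \<subseteq> {a. finite (supp a) \<and> S_of X a * mon_val a (xF F) \<noteq> 0}"
    proof
      fix a assume "a \<in> t_exp ` ?R"
      then obtain x where x: "x \<in> ?R" "a = t_exp x" by auto
      have s: "supp a = set x" using x supp_t_exp by simp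
      have sub: "set x \<subseteq> F" using x(1) unfolding restr_def by auto
      have "{y\<in>?R. t_exp y = t_exp x} \<noteq> {}" using x by auto
      moreover have "finite {y\<in>?R. t_exp y = t_exp x}" using fR by simp
      ultimately have "card {y\<in>?R. t_exp y = t_exp x} \<noteq> 0" by simp
      then have "S_of X a \<noteq> 0" using fib[OF x(1)] x unfolding S_of_def by simp
      moreover have "mon_val a (xF F) = 1" using s sub by (simp add: mon_val_xF)
      ultimately show "a \<in> {a. finite (supp a) \<and> S_of X a * mon_val a (xF F) \<noteq> 0}"
        using s by simp
    qed
  qed
  have "series_val (S_of X) (xF F) = (\<Sum>a\<in>t_exp ` ?R. S_of X a * mon_val a (xF F))"
    unfolding series_val_def I ..
  also have "\<dots> = (\<Sum>a\<in>t_exp ` ?R. int (card {y\<in>?R. t_exp y = a}))"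
  proof (rule sum.cong)
    fix a assume "a \<in> t_exp ` ?R"
    then obtain x where x: "x \<in> ?R" "a = t_exp x" by auto
    have "mon_val a (xF F) = 1" using x supp_t_exp[of x]
      by (simp add: mon_val_xF restr_def)
    then show "S_of X a * mon_val a (xF F) = int (card {y\<in>?R. t_exp y = a})"
      using fib[OF x(1)] x by (simp add: S_of_def)
  qed simp
  also have "\<dots> = int (\<Sum>a\<in>t_exp ` ?R. card {y\<in>?R. t_exp y = a})" by (simp only: of_nat_sum)
  also have "(\<Sum>a\<in>t_exp ` ?R. card {y\<in>?R. t_exp y = a}) = card ?R"
    using sum.group[OF fR finite_imageI[OF fR] subset_refl, of "\<lambda>_. 1::nat" t_exp]
    by (simp only: card_eq_sum)
  finally show ?thesis .
qed


section \<open>Closure properties of W and counting\<close>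

lemma W_iff: "A \<in> W \<longleftrightarrow> (\<forall>a\<in>A. a \<noteq> []) \<and> (\<forall>n. finite (restr A {0..n}))"
proof
  assume A: "A \<in> W"
  show "(\<forall>a\<in>A. a \<noteq> []) \<and> (\<forall>n. finite (restr A {0..n}))"
  proof
    show "\<forall>a\<in>A. a \<noteq> []" using A unfolding W_def by simp
    show "\<forall>n. finite (restr A {0..n})" using W_finite_restr[OF A] by simp
  qed
next
  assume A: "(\<forall>a\<in>A. a \<noteq> []) \<and> (\<forall>n. finite (restr A {0..n}))"
  have hb: "\<exists>h. \<forall>a\<in>A. set a \<subseteq> {0..n} \<longrightarrow> length a \<le> h" for n
  proof -
    have f: "finite (length ` restr A {0..n})" using A by blast
    show ?thesis
    proof (intro exI ballI impI)
      fix a assume "a \<in> A" "set a \<subseteq> {0..n}"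
      then have "length a \<in> length ` restr A {0..n}" unfolding restr_def by auto
      then show "length a \<le> Max (length ` restr A {0..n})" using f by (rule Max_ge[rotated])
    qed
  qed
  show "A \<in> W" unfolding W_def by (intro CollectI conjI) (use A hb in auto)
qed

lemma W_nonempty_elem: "A \<in> W \<Longrightarrow> a \<in> A \<Longrightarrow> a \<noteq> []"
  unfolding W_def by simp

lemma W_subset:
  assumes "A \<in> W" "B \<subseteq> A" shows "B \<in> W"
proof -
  have "restr B {0..n} \<subseteq> restr A {0..n}" for n using assms(2) unfolding restr_def by auto
  then have "finite (restr B {0..n})" for n using W_finite_restr[OF assms(1)] finite_subset by blast
  moreover have "\<forall>a\<in>B. a \<noteq> []" using assms W_nonempty_elem by blast
  ultimately show ?thesis unfolding W_iff by blast
qed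

lemma W_diff: "A \<in> W \<Longrightarrow> A - B \<in> W"
  by (rule W_subset) auto

lemma restr_Un: "restr (A \<union> B) F = restr A F \<union> restr B F"
  unfolding restr_def by auto

lemma restr_Diff: "restr (A - B) F = restr A F - restr B F"
  unfolding restr_def by auto

lemma W_Un: "A \<in> W \<Longrightarrow> B \<in> W \<Longrightarrow> A \<union> B \<in> W"
  unfolding W_iff restr_Un by auto

lemma restr_image:
  assumes "\<forall>x\<in>X. set (T x) = set x"
  shows "restr (T ` X) F = T ` restr X F"
  using assms unfolding restr_def by auto

lemma W_image:
  assumes "X \<in> W" "\<forall>x\<in>X. set (T x) = set x"
  shows "T ` X \<in> W"
  unfolding W_iff restr_image[OF assms(2)]
proof
  show "\<forall>a\<in>T ` X. a \<noteq> []"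
    using assms W_nonempty_elem[OF assms(1)] by fastforce
  show "\<forall>n. finite (T ` restr X {0..n})"
    using W_finite_restr[OF assms(1)] by simp
qed

lemma card_restr_image:
  assumes "inj_on T X" "\<forall>x\<in>X. set (T x) = set x"
  shows "card (restr (T ` X) F) = card (restr X F)"
proof -
  have "inj_on T (restr X F)" using assms(1) by (rule inj_on_subset) (auto simp: restr_def)
  then show ?thesis unfolding restr_image[OF assms(2)] by (rule card_image)
qed

lemma restr_cart: "restr (cart A B) F = (\<lambda>(a, b). a @ b) ` (restr A F \<times> restr B F)"
  unfolding restr_def cart_def by auto

lemma W_cart:
  assumes "A \<in> W" "B \<in> W"
  shows "cart A B \<in> W"
  unfolding W_iff restr_cart
proof
  show "\<forall>a\<in>cart A B. a \<noteq> []"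
    using W_nonempty_elem[OF assms(1)] unfolding cart_def by auto
  show "\<forall>n. finite ((\<lambda>(a, b). a @ b) ` (restr A {0..n} \<times> restr B {0..n}))"
    using W_finite_restr[OF assms(1)] W_finite_restr[OF assms(2)] by simp
qed

lemma card_restr_cart:
  assumes "multipliable A B" "A \<in> W" "B \<in> W" "finite F"
  shows "card (restr (cart A B) F) = card (restr A F) * card (restr B F)"
proof -
  have "inj_on (\<lambda>(a, b). a @ b) (restr A F \<times> restr B F)"
    using assms(1) unfolding multipliable_def by (rule inj_on_subset) (auto simp: restr_def)
  then show ?thesis unfolding restr_cart
    by (simp add: card_image card_cartesian_product)
qed

lemma cart_sing: "cart A (sing n) = (\<lambda>a. a @ [n]) ` A"
  unfolding cart_def sing_def by auto

lemma W_cart_sing: "A \<in> W \<Longrightarrow> cart A (sing n) \<in> W"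
  by (rule W_cart) (auto simp: W_def sing_def)

lemma card_restr_cart_sing:
  assumes "n \<in> F"
  shows "card (restr (cart A (sing n)) F) = card (restr A F)"
proof -
  have "restr (cart A (sing n)) F = (\<lambda>a. a @ [n]) ` restr A F"
    using assms unfolding cart_sing restr_def by auto
  moreover have "inj_on (\<lambda>a. a @ [n]) (restr A F)" by (rule inj_onI) simp
  ultimately show ?thesis by (simp add: card_image)
qed

lemma card_eq_diff_iff:
  assumes "finite S" "finite T"
  shows "card S = card T \<longleftrightarrow> card (S - T) = card (T - S)"
proof -
  have s: "card S = card (S - T) + card (S \<inter> T)"
  proof -
    have "S = (S - T) \<union> (S \<inter> T)" by blast
    then have "card S = card ((S - T) \<union> (S \<inter> T))" by simp
    also have "\<dots> = card (S - T) + card (S \<inter> T)"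
      by (rule card_Un_disjoint) (use assms in auto)
    finally show ?thesis .
  qed
  have t: "card T = card (T - S) + card (S \<inter> T)"
  proof -
    have "T = (T - S) \<union> (S \<inter> T)" by blast
    then have "card T = card ((T - S) \<union> (S \<inter> T))" by simp
    also have "\<dots> = card (T - S) + card (S \<inter> T)"
      by (rule card_Un_disjoint) (use assms in auto)
    finally show ?thesis .
  qed
  show ?thesis using s t by arith
qed

lemma restr_empty: "A \<in> W \<Longrightarrow> restr A {} = {}"
  unfolding restr_def using W_nonempty_elem by fastforce

lemma no_strict_decrease: "(\<forall>n. (f::nat \<Rightarrow> nat) (Suc n) < f n) \<Longrightarrow> False"
proof -
  assume a: "\<forall>n. f (Suc n) < f n"
  have "f n + n \<le> f 0" for n
  proof (induction n)
    case (Suc n) then show ?case using a[rule_format, of n] by simp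
  qed simp
  from this[of "Suc (f 0)"] show False by simp
qed

lemma construct_C:
  fixes G :: "nat \<Rightarrow> nat set" and e :: "nat \<Rightarrow> nat"
  assumes B: "B \<in> W"
    and ch: "\<forall>n m. n < m \<longrightarrow> G n \<subset> G m"
    and cov: "\<forall>k. \<exists>N. {0..k} \<subseteq> G N"
    and G0: "G 0 \<noteq> {}"
    and emono: "\<forall>n. e n \<le> e (Suc n)"
    and e0: "e 0 \<ge> 1"
  shows "\<exists>C\<in>W. C \<inter> B = {} \<and> C \<noteq> {} \<and> (\<forall>m. card (restr C (G m)) = e m)"
proof -
  have chle: "G n \<subseteq> G m" if "n \<le> m" for n m
  proof (cases "n = m")
    case False
    then have "n < m" using that by simp
    then show ?thesis using ch by blast
  qed simp
  have pex: "\<exists>q. q \<in> G n \<and> (\<forall>m<n. q \<notin> G m)" for n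
  proof (cases n)
    case 0
    then show ?thesis using G0 by auto
  next
    case (Suc k)
    then have "G k \<subset> G n" using ch by simp
    then obtain q where q: "q \<in> G n" "q \<notin> G k" by blast
    have "q \<notin> G m" if "m < n" for m
      using q chle[of m k] that Suc by auto
    then show ?thesis using q by blast
  qed
  define p where "p n = (SOME q. q \<in> G n \<and> (\<forall>m<n. q \<notin> G m))" for n
  have p: "p n \<in> G n \<and> (\<forall>m<n. p n \<notin> G m)" for n
    unfolding p_def by (rule someI_ex[OF pex])
  have pG: "p n \<in> G m \<longleftrightarrow> n \<le> m" for n m
  proof
    assume "p n \<in> G m" then show "n \<le> m" using p[of n] by (meson not_le)
  next
    assume "n \<le> m" then show "p n \<in> G m" using p[of n] chle by blast
  qed
  have pinj: "p n = p n' \<Longrightarrow> n = n'" for n n'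
    using pG[of n n] pG[of n' n'] pG[of n n'] pG[of n' n] by simp
  define hB where "hB n = Max (insert 0 (length ` restr B {p n}))" for n
  have hBb: "length x \<le> hB n" if "x \<in> B" "set x = {p n}" for x n
  proof -
    have "finite (restr B {p n})" using W_finite_restr[OF B] by simp
    moreover have "x \<in> restr B {p n}" using that unfolding restr_def by simp
    ultimately show ?thesis unfolding hB_def by (simp add: Max_ge_iff)
  qed
  define \<delta> where "\<delta> n = (if n = 0 then e 0 else e n - e (n - 1))" for n
  define J where "J n = {hB n<..hB n + \<delta> n}" for n
  define r where "r = (\<lambda>(n, L). replicate L (p n))"
  define C where "C = r ` (SIGMA n:UNIV. J n)"
  have Jpos: "L \<in> J n \<Longrightarrow> L > 0" for L n unfolding J_def by auto
  have setr: "L \<in> J n \<Longrightarrow> set (r (n, L)) = {p n}" for n L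
    using Jpos unfolding r_def by simp
  have rinj: "inj_on r (SIGMA n:UNIV. J n)"
  proof (rule inj_onI)
    fix x y assume x: "x \<in> (SIGMA n:UNIV. J n)" and y: "y \<in> (SIGMA n:UNIV. J n)" and eq: "r x = r y"
    obtain n L where xe: "x = (n, L)" "L \<in> J n" using x by auto
    obtain n' L' where ye: "y = (n', L')" "L' \<in> J n'" using y by auto
    have "L = L'" using eq xe ye unfolding r_def by (metis case_prod_conv length_replicate)
    moreover have "{p n} = {p n'}" using eq xe ye setr by metis
    ultimately show "x = y" using xe ye pinj by simp
  qed
  have restrC: "restr C (G m) = r ` (SIGMA n:{..m}. J n)" for m
  proof -
    have "restr C (G m) = {x \<in> r ` (SIGMA n:UNIV. J n). set x \<subseteq> G m}"
      unfolding restr_def C_def by simp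
    also have "\<dots> = r ` (SIGMA n:{..m}. J n)"
    proof
      show "{x \<in> r ` (SIGMA n:UNIV. J n). set x \<subseteq> G m} \<subseteq> r ` (SIGMA n:{..m}. J n)"
      proof
        fix x assume "x \<in> {x \<in> r ` (SIGMA n:UNIV. J n). set x \<subseteq> G m}"
        then obtain n L where "x = r (n, L)" "L \<in> J n" "set x \<subseteq> G m" by auto
        then show "x \<in> r ` (SIGMA n:{..m}. J n)" using setr pG by auto
      qed
      show "r ` (SIGMA n:{..m}. J n) \<subseteq> {x \<in> r ` (SIGMA n:UNIV. J n). set x \<subseteq> G m}"
        using setr pG by auto
    qed
    finally show ?thesis .
  qed
  have tele: "(\<Sum>n\<in>{..m}. \<delta> n) = e m" for m
  proof (induction m)
    case 0 then show ?case by (simp add: \<delta>_def)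
  next
    case (Suc m)
    then show ?case using emono[rule_format, of m] by (simp add: \<delta>_def)
  qed
  have cardC: "card (restr C (G m)) = e m" for m
  proof -
    have "inj_on r (SIGMA n:{..m}. J n)" using rinj by (rule inj_on_subset) auto
    then have "card (restr C (G m)) = card (SIGMA n:{..m}. J n)"
      unfolding restrC by (rule card_image)
    also have "\<dots> = (\<Sum>n\<in>{..m}. card (J n))" by (rule card_SigmaI) (auto simp: J_def)
    also have "\<dots> = (\<Sum>n\<in>{..m}. \<delta> n)" by (simp add: J_def)
    finally show ?thesis using tele by simp
  qed
  have disj: "C \<inter> B = {}"
  proof (rule ccontr)
    assume "C \<inter> B \<noteq> {}"
    then obtain n L where nL: "L \<in> J n" "r (n, L) \<in> B" unfolding C_def by auto
    then have "length (r (n, L)) \<le> hB n" using hBb setr by blast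
    moreover have "length (r (n, L)) = L" unfolding r_def by simp
    ultimately show False using nL(1) unfolding J_def by simp
  qed
  have nonempty: "C \<noteq> {}"
  proof -
    have "Suc (hB 0) \<in> J 0" using e0 unfolding J_def \<delta>_def by simp
    then show ?thesis unfolding C_def by blast
  qed
  have CW: "C \<in> W"
    unfolding W_iff
  proof
    show "\<forall>a\<in>C. a \<noteq> []" unfolding C_def r_def using Jpos by auto
    show "\<forall>k. finite (restr C {0..k})"
    proof
      fix k
      obtain N where N: "{0..k} \<subseteq> G N" using cov by blast
      have "restr C {0..k} \<subseteq> restr C (G N)" using N unfolding restr_def by auto
      moreover have "finite (restr C (G N))" unfolding restrC
        by (intro finite_imageI finite_SigmaI) (auto simp: J_def)
      ultimately show "finite (restr C {0..k})" by (rule finite_subset)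
    qed
  qed
  show ?thesis using CW disj nonempty cardC by blast
qed

section \<open>Ultrafilter toolkit\<close>

locale UF =
  fixes U :: "nat set set set"
  assumes uf: "ultrafilter_on Fin U" and fine: "fine U" and ram: "ramsey U"
begin

lemma ufs_all: "(\<forall>A\<in>U. A \<subseteq> Fin) \<and> Fin \<in> U \<and> {} \<notin> U \<and>
     (\<forall>A\<in>U. \<forall>B\<in>U. A \<inter> B \<in> U) \<and>
     (\<forall>A\<in>U. \<forall>B. A \<subseteq> B \<and> B \<subseteq> Fin \<longrightarrow> B \<in> U) \<and>
     (\<forall>A. A \<subseteq> Fin \<longrightarrow> A \<in> U \<or> Fin - A \<in> U)"
  using uf unfolding ultrafilter_on_def .

lemmas ufs = conjunct1[OF ufs_all] conjunct1[OF conjunct2[OF ufs_all]]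
  conjunct1[OF conjunct2[OF conjunct2[OF ufs_all]]]
  conjunct1[OF conjunct2[OF conjunct2[OF conjunct2[OF ufs_all]]]]
  conjunct1[OF conjunct2[OF conjunct2[OF conjunct2[OF conjunct2[OF ufs_all]]]]]
  conjunct2[OF conjunct2[OF conjunct2[OF conjunct2[OF conjunct2[OF ufs_all]]]]]

lemma U_sub: "A \<in> U \<Longrightarrow> A \<subseteq> Fin"
  using ufs(1) by (rule bspec)

lemma Fin_in: "Fin \<in> U"
  by (rule ufs(2))

lemma empty_notin: "{} \<notin> U"
  by (rule ufs(3))

lemma U_int: "A \<in> U \<Longrightarrow> B \<in> U \<Longrightarrow> A \<inter> B \<in> U"
  using ufs(4) by blast

lemma U_mono: "A \<in> U \<Longrightarrow> A \<subseteq> B \<Longrightarrow> B \<subseteq> Fin \<Longrightarrow> B \<in> U"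
  using ufs(5) by blast

lemma U_compl: "A \<subseteq> Fin \<Longrightarrow> A \<in> U \<or> Fin - A \<in> U"
  using ufs(6) by blast

lemma U_coll: "A \<in> U \<Longrightarrow> (\<And>F. F \<in> A \<Longrightarrow> P F) \<Longrightarrow> {F\<in>Fin. P F} \<in> U"
  by (rule U_mono[of A]) (auto dest: U_sub)

lemma U_and: "{F\<in>Fin. P F} \<in> U \<Longrightarrow> {F\<in>Fin. Q F} \<in> U \<Longrightarrow> {F\<in>Fin. P F \<and> Q F} \<in> U"
proof -
  assume a: "{F\<in>Fin. P F} \<in> U" "{F\<in>Fin. Q F} \<in> U"
  have "{F\<in>Fin. P F} \<inter> {F\<in>Fin. Q F} = {F\<in>Fin. P F \<and> Q F}" by auto
  then show ?thesis using U_int[OF a] by simp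
qed

lemma U_nonempty: "A \<in> U \<Longrightarrow> \<exists>F. F \<in> A"
  using empty_notin by (metis equals0I)

lemma U_not: "{F\<in>Fin. P F} \<in> U \<Longrightarrow> {F\<in>Fin. \<not> P F} \<notin> U"
proof
  assume a: "{F\<in>Fin. P F} \<in> U" "{F\<in>Fin. \<not> P F} \<in> U"
  have "{F\<in>Fin. P F} \<inter> {F\<in>Fin. \<not> P F} = {}" by auto
  then show False using U_int[OF a] empty_notin by simp
qed

lemma U_disj: "{F\<in>Fin. P F \<or> Q F} \<in> U \<Longrightarrow> {F\<in>Fin. P F} \<in> U \<or> {F\<in>Fin. Q F} \<in> U"
proof (rule ccontr)
  assume a: "{F\<in>Fin. P F \<or> Q F} \<in> U" and n: "\<not> ({F\<in>Fin. P F} \<in> U \<or> {F\<in>Fin. Q F} \<in> U)"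
  have "Fin - {F\<in>Fin. P F} \<in> U" using n U_compl[of "{F\<in>Fin. P F}"] by auto
  moreover have "Fin - {F\<in>Fin. Q F} \<in> U" using n U_compl[of "{F\<in>Fin. Q F}"] by auto
  ultimately have "(Fin - {F\<in>Fin. P F}) \<inter> (Fin - {F\<in>Fin. Q F}) \<inter> {F\<in>Fin. P F \<or> Q F} \<in> U"
    using a U_int by blast
  moreover have "(Fin - {F\<in>Fin. P F}) \<inter> (Fin - {F\<in>Fin. Q F}) \<inter> {F\<in>Fin. P F \<or> Q F} = {}"
    by auto
  ultimately show False using empty_notin by simp
qed

lemma U_cases: "{F\<in>Fin. P F} \<in> U \<or> {F\<in>Fin. \<not> P F} \<in> U"
proof -
  have "Fin - {F\<in>Fin. P F} = {F\<in>Fin. \<not> P F}" by auto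
  then show ?thesis using U_compl[of "{F\<in>Fin. P F}"] by auto
qed

lemma fine_sub: "finite S \<Longrightarrow> {F\<in>Fin. S \<subseteq> F} \<in> U"
proof (induction S rule: finite_induct)
  case empty
  then show ?case using Fin_in by simp
next
  case (insert x S)
  have "{F\<in>Fin. x \<in> F} \<in> U" using fine unfolding fine_def by blast
  from U_and[OF this insert.IH] show ?case by simp
qed

lemma U_infinite: "A \<in> U \<Longrightarrow> infinite A"
proof
  assume a: "A \<in> U" "finite A"
  have "A \<subseteq> Fin" using a U_sub by blast
  then have "finite (\<Union>A)" using a(2) by (intro finite_Union) (auto simp: Fin_def)
  then obtain n where n: "n \<notin> \<Union>A" using ex_new_if_finite[OF infinite_UNIV_nat] by blast
  have "{F\<in>Fin. {n} \<subseteq> F} \<inter> A \<in> U" using U_int[OF fine_sub[of "{n}"] a(1)] by simp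
  moreover have "{F\<in>Fin. {n} \<subseteq> F} \<inter> A = {}" using n by auto
  ultimately show False using empty_notin by simp
qed

lemma chain_exists: "\<exists>H\<in>U. \<forall>F\<in>H. \<forall>G\<in>H. F \<subseteq> G \<or> G \<subseteq> F"
proof -
  define P where "P = (\<lambda>S::nat set set. \<forall>F\<in>S. \<forall>G\<in>S. F \<subseteq> G \<or> G \<subseteq> F)"
  obtain H where H: "H \<in> U" and hom: "(\<forall>F\<in>H. \<forall>G\<in>H. F \<noteq> G \<longrightarrow> P {F, G}) \<or>
        (\<forall>F\<in>H. \<forall>G\<in>H. F \<noteq> G \<longrightarrow> \<not> P {F, G})"
    using spec[OF ram[unfolded ramsey_def], of P] by blast
  show ?thesis
  proof (cases "\<forall>F\<in>H. \<forall>G\<in>H. F \<noteq> G \<longrightarrow> P {F, G}")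
    case True
    have "\<forall>F\<in>H. \<forall>G\<in>H. F \<subseteq> G \<or> G \<subseteq> F"
    proof (intro ballI)
      fix F G assume FG: "F \<in> H" "G \<in> H"
      show "F \<subseteq> G \<or> G \<subseteq> F"
      proof (cases "F = G")
        case False
        then have "P {F, G}" using True FG by blast
        then show ?thesis unfolding P_def by simp
      qed simp
    qed
    then show ?thesis using H by blast
  next
    case False
    then have neg: "\<forall>F\<in>H. \<forall>G\<in>H. F \<noteq> G \<longrightarrow> \<not> P {F, G}" using hom by blast
    obtain F where F: "F \<in> H" using U_nonempty[OF H] by blast
    then have fF: "finite F" using U_sub[OF H] by (auto simp: Fin_def)
    have K: "H \<inter> {G\<in>Fin. F \<subseteq> G} \<in> U" using U_int[OF H fine_sub[OF fF]] .
    then have "infinite (H \<inter> {G\<in>Fin. F \<subseteq> G})" by (rule U_infinite)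
    then have "H \<inter> {G\<in>Fin. F \<subseteq> G} \<noteq> {F}" by auto
    moreover have "H \<inter> {G\<in>Fin. F \<subseteq> G} \<noteq> {}" using U_nonempty[OF K] by auto
    ultimately obtain G where G: "G \<in> H \<inter> {G\<in>Fin. F \<subseteq> G}" "G \<noteq> F" by blast
    then have "P {F, G}" unfolding P_def by simp
    then show ?thesis using neg F G by blast
  qed
qed

lemma chain_seq:
  assumes Q: "Q \<in> U"
  shows "\<exists>G::nat \<Rightarrow> nat set. (\<forall>n. G n \<in> Q) \<and> (\<forall>n m. n < m \<longrightarrow> G n \<subset> G m) \<and> range G \<in> U"
proof -
  obtain H where H: "H \<in> U" and ch: "\<forall>F\<in>H. \<forall>G\<in>H. F \<subseteq> G \<or> G \<subseteq> F"
    using chain_exists by blast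
  define K where "K = H \<inter> Q"
  have K: "K \<in> U" unfolding K_def using U_int[OF H Q] .
  have fin: "F \<in> K \<Longrightarrow> finite F" for F using U_sub[OF K] by (auto simp: Fin_def)
  have chK: "\<forall>F\<in>K. \<forall>G\<in>K. F \<subseteq> G \<or> G \<subseteq> F" using ch unfolding K_def by blast
  have inj: "inj_on card K"
  proof (rule inj_onI)
    fix F G assume "F \<in> K" "G \<in> K" "card F = card G"
    then show "F = G" using chK card_subset_eq fin by metis
  qed
  have infK: "infinite K" using U_infinite[OF K] .
  have infC: "infinite (card ` K)" using infK inj finite_imageD by blast
  define e where "e = enumerate (card ` K)"
  define G where "G n = inv_into K card (e n)" for n
  have eK: "e n \<in> card ` K" for n unfolding e_def using enumerate_in_set[OF infC] .
  have GK: "G n \<in> K" for n unfolding G_def using inv_into_into[OF eK] .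
  have cG: "card (G n) = e n" for n unfolding G_def using f_inv_into_f[OF eK] .
  have mono: "G n \<subset> G m" if "n < m" for n m
  proof -
    have lt: "e n < e m" unfolding e_def using enumerate_mono[OF that infC] .
    have "G n \<subseteq> G m \<or> G m \<subseteq> G n" using chK GK by blast
    moreover have "\<not> G m \<subseteq> G n"
    proof
      assume "G m \<subseteq> G n"
      then have "card (G m) \<le> card (G n)" by (rule card_mono[OF fin[OF GK]])
      then show False using lt cG by simp
    qed
    ultimately show ?thesis using lt cG by auto
  qed
  have "range G = K"
  proof
    show "range G \<subseteq> K" using GK by auto
    show "K \<subseteq> range G"
    proof
      fix F assume F: "F \<in> K"
      obtain n where "e n = card F"
        unfolding e_def using enumerate_Ex[OF infC] F by blast
      then have "G n = F" using inj_onD[OF inj, of "G n" F] GK F cG by simp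
      then show "F \<in> range G" by auto
    qed
  qed
  then have rU: "range G \<in> U" using K by simp
  have GQ: "\<forall>n. G n \<in> Q" using GK unfolding K_def by blast
  have mo: "\<forall>n m. n < m \<longrightarrow> G n \<subset> G m" using mono by blast
  show ?thesis
    using GQ mo rU by blast
qed

lemma chain_cover:
  assumes "range (G::nat \<Rightarrow> nat set) \<in> U" "\<forall>n m. n < m \<longrightarrow> G n \<subset> G m" "finite S"
  shows "\<exists>n. S \<subseteq> G n"
proof -
  have "{F\<in>Fin. S \<subseteq> F} \<inter> range G \<in> U" using U_int[OF fine_sub[OF assms(3)] assms(1)] .
  then obtain F where "F \<in> {F\<in>Fin. S \<subseteq> F} \<inter> range G" using U_nonempty by blast
  then show ?thesis by auto
qed

end

context UF
begin

lemma U_imp: "{F\<in>Fin. P F} \<in> U \<Longrightarrow> (\<And>F. finite F \<Longrightarrow> P F \<Longrightarrow> Q F) \<Longrightarrow> {F\<in>Fin. Q F} \<in> U"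
  by (rule U_coll) (auto simp: Fin_def)

lemma U_excl:
  assumes "{F\<in>Fin. P F} \<in> U" "{F\<in>Fin. Q F} \<in> U" "\<And>F. P F \<Longrightarrow> Q F \<Longrightarrow> False"
  shows False
proof -
  have "{F\<in>Fin. P F \<and> Q F} \<in> U" using U_and[OF assms(1,2)] .
  moreover have "{F\<in>Fin. P F \<and> Q F} = {}" using assms(3) by blast
  ultimately show False using empty_notin by simp
qed

lemma range_Fin: "range G \<in> U \<Longrightarrow> range G \<subseteq> Fin"
  by (rule U_sub)

lemma U_range: "range (G::nat \<Rightarrow> nat set) \<in> U \<Longrightarrow> (\<And>n. P (G n)) \<Longrightarrow> {F\<in>Fin. P F} \<in> U"
  by (rule U_coll) auto

lemma Ueq:
  assumes "X \<in> W" "Y \<in> W"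
  shows "U_eq U X Y \<longleftrightarrow> {F\<in>Fin. card (restr X F) = card (restr Y F)} \<in> U"
proof -
  have "{F\<in>Fin. series_val (S_of X) (xF F) = series_val (S_of Y) (xF F)} =
        {F\<in>Fin. card (restr X F) = card (restr Y F)}"
  proof (rule Collect_cong)
    fix F
    show "(F \<in> Fin \<and> series_val (S_of X) (xF F) = series_val (S_of Y) (xF F)) =
          (F \<in> Fin \<and> card (restr X F) = card (restr Y F))"
    proof (cases "F \<in> Fin")
      case True
      then have fF: "finite F" by (simp add: Fin_def)
      show ?thesis unfolding series_val_S_of[OF assms(1) fF] series_val_S_of[OF assms(2) fF] by simp
    qed simp
  qed
  then show ?thesis unfolding U_eq_def by simp
qed

lemma good_chain:
  assumes "Q \<in> U"
  obtains G :: "nat \<Rightarrow> nat set" where "\<And>n. G n \<in> Q" "\<forall>n m. n < m \<longrightarrow> G n \<subset> G m"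
    "range G \<in> U" "\<And>S. finite S \<Longrightarrow> \<exists>n. S \<subseteq> G n"
proof -
  obtain G :: "nat \<Rightarrow> nat set" where G: "\<forall>n. G n \<in> Q" "\<forall>n m. n < m \<longrightarrow> G n \<subset> G m" "range G \<in> U"
    using chain_seq[OF assms] by blast
  have "\<exists>n. S \<subseteq> G n" if "finite S" for S using chain_cover[OF G(3) G(2) that] .
  then show ?thesis using that G by blast
qed

lemma chain_le:
  fixes G :: "nat \<Rightarrow> nat set" and n m :: nat
  assumes "\<forall>n m. n < m \<longrightarrow> G n \<subset> G m" "n \<le> m"
  shows "G n \<subseteq> G m"
proof (cases "n = m")
  case False
  then have "n < m" using assms(2) by simp
  then show ?thesis using assms(1) by blast
qed simp

lemma gt1:
  assumes A: "A \<in> W" and B: "B \<in> W" and g: "num_gt (U_eq U) A B"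
  shows "{F\<in>Fin. card (restr B F) < card (restr A F)} \<in> U"
proof -
  obtain A' B' where A': "A' \<in> W" and B': "B' \<in> W" and sub: "B' \<subset> A'"
    and e1: "U_eq U A A'" and e2: "U_eq U B B'"
    using g unfolding num_gt_def by blast
  obtain x where x: "x \<in> A'" "x \<notin> B'" using sub by blast
  have s: "{F\<in>Fin. set x \<subseteq> F} \<in> U" using fine_sub by simp
  have e1': "{F\<in>Fin. card (restr A F) = card (restr A' F)} \<in> U" using e1 Ueq[OF A A'] by simp
  have e2': "{F\<in>Fin. card (restr B F) = card (restr B' F)} \<in> U" using e2 Ueq[OF B B'] by simp
  show ?thesis
  proof (rule U_imp[OF U_and[OF U_and[OF e1' e2'] s]])
    fix F :: "nat set" assume fF: "finite F" and
      h: "(card (restr A F) = card (restr A' F) \<and> card (restr B F) = card (restr B' F)) \<and> set x \<subseteq> F"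
    have "restr B' F \<subset> restr A' F"
    proof
      show "restr B' F \<subseteq> restr A' F" using sub unfolding restr_def by auto
      show "restr B' F \<noteq> restr A' F" using x h unfolding restr_def by auto
    qed
    then have "card (restr B' F) < card (restr A' F)"
      by (rule psubset_card_mono[OF W_finite_restr[OF A' fF]])
    then show "card (restr B F) < card (restr A F)" using h by simp
  qed
qed

lemma gt2:
  assumes A: "A \<in> W" and B: "B \<in> W"
    and lt: "{F\<in>Fin. card (restr B F) < card (restr A F)} \<in> U"
  shows "num_gt (U_eq U) A B"
proof -
  define d where "d F = card (restr A F) - card (restr B F)" for F
  define P where "P = (\<lambda>S::nat set set. \<forall>F\<in>S. \<forall>G\<in>S. F \<subset> G \<longrightarrow> d F \<le> d G)"
  obtain H where H: "H \<in> U" and hom: "(\<forall>F\<in>H. \<forall>G\<in>H. F \<noteq> G \<longrightarrow> P {F, G}) \<or>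
        (\<forall>F\<in>H. \<forall>G\<in>H. F \<noteq> G \<longrightarrow> \<not> P {F, G})"
    using spec[OF ram[unfolded ramsey_def], of P] by blast
  obtain G :: "nat \<Rightarrow> nat set" where GQ: "\<And>n. G n \<in> {F\<in>Fin. card (restr B F) < card (restr A F)} \<inter> H"
    and ch: "\<forall>n m. n < m \<longrightarrow> G n \<subset> G m" and rG: "range G \<in> U"
    and cov: "\<And>S. finite S \<Longrightarrow> \<exists>n. S \<subseteq> G n"
    using good_chain[OF U_int[OF lt H]] by blast
  have step: "G n \<subset> G (Suc n)" for n using ch by simp
  have mono: "\<forall>n. d (G n) \<le> d (G (Suc n))"
  proof (cases "\<forall>F\<in>H. \<forall>G\<in>H. F \<noteq> G \<longrightarrow> P {F, G}")
    case True
    show ?thesis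
    proof
      fix n
      have "G n \<in> H" "G (Suc n) \<in> H" "G n \<noteq> G (Suc n)" using GQ step[of n] by auto
      then have "P {G n, G (Suc n)}" using True by blast
      then show "d (G n) \<le> d (G (Suc n))" using step[of n] unfolding P_def by blast
    qed
  next
    case False
    then have neg: "\<forall>F\<in>H. \<forall>G\<in>H. F \<noteq> G \<longrightarrow> \<not> P {F, G}" using hom by blast
    have "d (G (Suc n)) < d (G n)" for n
    proof -
      have "G n \<in> H" "G (Suc n) \<in> H" "G n \<noteq> G (Suc n)" using GQ step[of n] by auto
      then have np: "\<not> P {G n, G (Suc n)}" using neg by blast
      have "\<not> G (Suc n) \<subset> G n" using step[of n] by auto
      then show ?thesis using np step[of n] unfolding P_def by auto
    qed
    then show ?thesis using no_strict_decrease[of "\<lambda>n. d (G n)"] by blast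
  qed
  have G0: "G 0 \<noteq> {}"
  proof
    assume "G 0 = {}"
    then have "card (restr A (G 0)) = 0" using restr_empty[OF A] by simp
    then show False using GQ[of 0] by simp
  qed
  have "card (restr B (G 0)) < card (restr A (G 0))" using GQ[of 0] by simp
  then have e0: "d (G 0) \<ge> 1" unfolding d_def by simp
  have cov': "\<forall>k. \<exists>N. {0..k} \<subseteq> G N" using cov by simp
  obtain C where C: "C \<in> W" "C \<inter> B = {}" "C \<noteq> {}" "\<forall>m. card (restr C (G m)) = d (G m)"
    using construct_C[OF B ch cov' G0 mono e0] by blast
  define A' where "A' = B \<union> C"
  have A'W: "A' \<in> W" unfolding A'_def using W_Un[OF B C(1)] .
  have sub: "B \<subset> A'" unfolding A'_def using C(2,3) by blast
  have "{F\<in>Fin. card (restr A F) = card (restr A' F)} \<in> U"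
  proof (rule U_range[OF rG])
    fix n
    have fG: "finite (G n)" using GQ[of n] by (simp add: Fin_def)
    have "card (restr A' (G n)) = card (restr B (G n)) + card (restr C (G n))"
      unfolding A'_def restr_Un using W_finite_restr[OF B fG] W_finite_restr[OF C(1) fG] C(2)
      by (intro card_Un_disjoint) (auto simp: restr_def)
    also have "\<dots> = card (restr A (G n))" using C(4) GQ[of n] unfolding d_def by simp
    finally show "card (restr A (G n)) = card (restr A' (G n))" by simp
  qed
  then have e1: "U_eq U A A'" using Ueq[OF A A'W] by simp
  have e2: "U_eq U B B" using Ueq[OF B B] Fin_in by simp
  show ?thesis unfolding num_gt_def using A'W B sub e1 e2 by blast
qed

lemma natural_core:
  assumes "X \<in> W" "inj_on T X" "\<forall>x\<in>X. set (T x) = set x"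
  shows "U_eq U X (T ` X)"
proof -
  have "{F\<in>Fin. card (restr X F) = card (restr (T ` X) F)} = Fin"
    using card_restr_image[OF assms(2,3)] by auto
  then show ?thesis using Ueq[OF assms(1) W_image[OF assms(1,3)]] Fin_in by simp
qed

lemma equi: "equinumerosity (U_eq U)"
  unfolding equinumerosity_def
proof (intro conjI)
  show "\<forall>A\<in>W. U_eq U A A" using Ueq Fin_in by simp
  show "\<forall>A\<in>W. \<forall>B\<in>W. U_eq U A B \<longrightarrow> U_eq U B A"
  proof (intro ballI impI)
    fix A B assume A: "A \<in> W" and B: "B \<in> W" and e: "U_eq U A B"
    have "{F\<in>Fin. card (restr A F) = card (restr B F)} \<in> U" using e Ueq[OF A B] by simp
    then have "{F\<in>Fin. card (restr B F) = card (restr A F)} \<in> U" by (rule U_imp) simp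
    then show "U_eq U B A" using Ueq[OF B A] by simp
  qed
  show "\<forall>A\<in>W. \<forall>B\<in>W. \<forall>C\<in>W. U_eq U A B \<longrightarrow> U_eq U B C \<longrightarrow> U_eq U A C"
  proof (intro ballI impI)
    fix A B C assume A: "A \<in> W" and B: "B \<in> W" and C: "C \<in> W" and e: "U_eq U A B" "U_eq U B C"
    have "{F\<in>Fin. card (restr A F) = card (restr B F)} \<in> U" using e Ueq[OF A B] by simp
    moreover have "{F\<in>Fin. card (restr B F) = card (restr C F)} \<in> U" using e Ueq[OF B C] by simp
    ultimately have "{F\<in>Fin. card (restr A F) = card (restr C F)} \<in> U"
      by (rule U_imp[OF U_and]) simp
    then show "U_eq U A C" using Ueq[OF A C] by simp
  qed
  show "\<forall>A\<in>W. \<forall>B\<in>W. U_eq U A B = U_eq U (A - B) (B - A)"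
  proof (intro ballI)
    fix A B assume A: "A \<in> W" and B: "B \<in> W"
    have "{F\<in>Fin. card (restr A F) = card (restr B F)} =
          {F\<in>Fin. card (restr (A - B) F) = card (restr (B - A) F)}"
    proof (rule Collect_cong)
      fix F
      show "(F \<in> Fin \<and> card (restr A F) = card (restr B F)) =
            (F \<in> Fin \<and> card (restr (A - B) F) = card (restr (B - A) F))"
      proof (cases "F \<in> Fin")
        case True
        then have fF: "finite F" by (simp add: Fin_def)
        show ?thesis unfolding restr_Diff
          using card_eq_diff_iff[OF W_finite_restr[OF A fF] W_finite_restr[OF B fF]] by simp
      qed simp
    qed
    then show "U_eq U A B = U_eq U (A - B) (B - A)"
      using Ueq[OF A B] Ueq[OF W_diff[OF A] W_diff[OF B]] by simp
  qed
  show "\<forall>A\<in>W. \<forall>B\<in>W.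
        (U_eq U A B \<and> \<not> num_gt (U_eq U) A B \<and> \<not> num_gt (U_eq U) B A) \<or>
        (\<not> U_eq U A B \<and> num_gt (U_eq U) A B \<and> \<not> num_gt (U_eq U) B A) \<or>
        (\<not> U_eq U A B \<and> \<not> num_gt (U_eq U) A B \<and> num_gt (U_eq U) B A)"
  proof (intro ballI)
    fix A B assume A: "A \<in> W" and B: "B \<in> W"
    let ?a = "\<lambda>F. card (restr A F)" and ?b = "\<lambda>F. card (restr B F)"
    have eq: "U_eq U A B \<longleftrightarrow> {F\<in>Fin. ?a F = ?b F} \<in> U" using Ueq[OF A B] .
    have g1: "num_gt (U_eq U) A B \<longleftrightarrow> {F\<in>Fin. ?b F < ?a F} \<in> U"
      using gt1[OF A B] gt2[OF A B] by blast
    have g2: "num_gt (U_eq U) B A \<longleftrightarrow> {F\<in>Fin. ?a F < ?b F} \<in> U"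
      using gt1[OF B A] gt2[OF B A] by blast
    have tt: "{F\<in>Fin. ?a F = ?b F \<or> (?b F < ?a F \<or> ?a F < ?b F)} \<in> U"
      using Fin_in by (rule U_coll) auto
    then have three: "{F\<in>Fin. ?a F = ?b F} \<in> U \<or> {F\<in>Fin. ?b F < ?a F} \<in> U \<or> {F\<in>Fin. ?a F < ?b F} \<in> U"
      using U_disj[OF tt] U_disj[of "\<lambda>F. ?b F < ?a F" "\<lambda>F. ?a F < ?b F"] by blast
    have x1: "\<not> ({F\<in>Fin. ?a F = ?b F} \<in> U \<and> {F\<in>Fin. ?b F < ?a F} \<in> U)"
      using U_excl[of "\<lambda>F. ?a F = ?b F" "\<lambda>F. ?b F < ?a F"] by auto
    have x2: "\<not> ({F\<in>Fin. ?a F = ?b F} \<in> U \<and> {F\<in>Fin. ?a F < ?b F} \<in> U)"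
      using U_excl[of "\<lambda>F. ?a F = ?b F" "\<lambda>F. ?a F < ?b F"] by auto
    have x3: "\<not> ({F\<in>Fin. ?b F < ?a F} \<in> U \<and> {F\<in>Fin. ?a F < ?b F} \<in> U)"
      using U_excl[of "\<lambda>F. ?b F < ?a F" "\<lambda>F. ?a F < ?b F"] by auto
    show "(U_eq U A B \<and> \<not> num_gt (U_eq U) A B \<and> \<not> num_gt (U_eq U) B A) \<or>
        (\<not> U_eq U A B \<and> num_gt (U_eq U) A B \<and> \<not> num_gt (U_eq U) B A) \<or>
        (\<not> U_eq U A B \<and> \<not> num_gt (U_eq U) A B \<and> num_gt (U_eq U) B A)"
      unfolding eq g1 g2 using three x1 x2 x3 by blast
  qed
  show "\<forall>A\<in>W. \<forall>T. inj_on T A \<and> (\<forall>a\<in>A. mset (T a) = mset a) \<longrightarrow> U_eq U A (T ` A)"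
  proof (intro ballI allI impI)
    fix A T assume A: "A \<in> W" and h: "inj_on T A \<and> (\<forall>a\<in>A. mset (T a) = mset a)"
    have "\<forall>a\<in>A. set (T a) = set a" using h by (metis mset_eq_setD)
    then show "U_eq U A (T ` A)" using natural_core[OF A] h by blast
  qed
  show "\<forall>A\<in>W. \<forall>n. U_eq U (cart A (sing n)) A"
  proof (intro ballI allI)
    fix A n assume A: "A \<in> W"
    have "{F\<in>Fin. n \<in> F} \<in> U" using fine unfolding fine_def by blast
    then have "{F\<in>Fin. card (restr (cart A (sing n)) F) = card (restr A F)} \<in> U"
      by (rule U_imp) (rule card_restr_cart_sing)
    then show "U_eq U (cart A (sing n)) A" using Ueq[OF W_cart_sing[OF A] A] by simp
  qed
  show "\<forall>A\<in>W. \<forall>B\<in>W. \<forall>A'\<in>W. \<forall>B'\<in>W.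
        multipliable A B \<and> multipliable A' B' \<and> U_eq U A A' \<and> U_eq U B B' \<longrightarrow>
        U_eq U (cart A B) (cart A' B')"
  proof (intro ballI impI)
    fix A B A' B' assume A: "A \<in> W" and B: "B \<in> W" and A': "A' \<in> W" and B': "B' \<in> W"
      and h: "multipliable A B \<and> multipliable A' B' \<and> U_eq U A A' \<and> U_eq U B B'"
    have e1: "{F\<in>Fin. card (restr A F) = card (restr A' F)} \<in> U" using h Ueq[OF A A'] by simp
    have e2: "{F\<in>Fin. card (restr B F) = card (restr B' F)} \<in> U" using h Ueq[OF B B'] by simp
    have "{F\<in>Fin. card (restr (cart A B) F) = card (restr (cart A' B') F)} \<in> U"
    proof (rule U_imp[OF U_and[OF e1 e2]])
      fix F :: "nat set" assume "finite F" "card (restr A F) = card (restr A' F) \<and> card (restr B F) = card (restr B' F)"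
      then show "card (restr (cart A B) F) = card (restr (cart A' B') F)"
        using card_restr_cart[OF _ A B] card_restr_cart[OF _ A' B'] h by simp
    qed
    then show "U_eq U (cart A B) (cart A' B')" using Ueq[OF W_cart[OF A B] W_cart[OF A' B']] by simp
  qed
qed

lemma natural_U: "natural (U_eq U)"
  unfolding natural_def using natural_core by blast

end

context UF
begin

lemma cong_iff:
  assumes X: "X \<in> W" and Y: "Y \<in> W"
  shows "U_eq U X Y \<longleftrightarrow> (\<exists>\<tau>. U_congruence U X Y \<tau>)"
proof
  assume "\<exists>\<tau>. U_congruence U X Y \<tau>"
  then obtain \<tau> where t: "\<tau> ` X \<subseteq> Y" "inj_on \<tau> X" "{F\<in>Fin. \<tau> ` restr X F = restr Y F} \<in> U"
    unfolding U_congruence_def by blast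
  have "{F\<in>Fin. card (restr X F) = card (restr Y F)} \<in> U"
  proof (rule U_imp[OF t(3)])
    fix F assume "\<tau> ` restr X F = restr Y F"
    moreover have "inj_on \<tau> (restr X F)" using t(2) by (rule inj_on_subset) (auto simp: restr_def)
    ultimately show "card (restr X F) = card (restr Y F)" by (metis card_image)
  qed
  then show "U_eq U X Y" using Ueq[OF X Y] by simp
next
  assume "U_eq U X Y"
  then have E: "{F\<in>Fin. card (restr X F) = card (restr Y F)} \<in> U" using Ueq[OF X Y] by simp
  obtain G :: "nat \<Rightarrow> nat set" where GQ: "\<And>n. G n \<in> {F\<in>Fin. card (restr X F) = card (restr Y F)}"
    and ch: "\<forall>n m. n < m \<longrightarrow> G n \<subset> G m" and rG: "range G \<in> U"
    and cov: "\<And>S. finite S \<Longrightarrow> \<exists>n. S \<subseteq> G n"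
    using good_chain[OF E] by blast
  have fG: "finite (G n)" for n using GQ[of n] by (simp add: Fin_def)
  define lev where "lev x = (LEAST n. set x \<subseteq> G n)" for x :: "nat list"
  have levex: "\<exists>n. set x \<subseteq> G n" for x :: "nat list" using cov by simp
  have lev_iff: "set x \<subseteq> G m \<longleftrightarrow> lev x \<le> m" for x m
  proof
    assume "set x \<subseteq> G m" then show "lev x \<le> m" unfolding lev_def by (rule Least_le)
  next
    assume "lev x \<le> m"
    moreover have "set x \<subseteq> G (lev x)" unfolding lev_def using levex[of x] by (rule LeastI_ex)
    ultimately show "set x \<subseteq> G m" using chain_le[OF ch] by blast
  qed
  have restr_lev: "restr Z (G m) = {x\<in>Z. lev x \<le> m}" for Z m
    unfolding restr_def using lev_iff by simp
  define LX where "LX k = {x\<in>X. lev x = k}" for k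
  define LY where "LY k = {y\<in>Y. lev y = k}" for k
  have cle: "card {x\<in>X. lev x \<le> m} = card {y\<in>Y. lev y \<le> m}" for m
    using GQ[of m] restr_lev[of X m] restr_lev[of Y m] by simp
  have finle: "finite {x\<in>Z. lev x \<le> m}" if "Z \<in> W" for Z m
    using W_finite_restr[OF that fG[of m]] unfolding restr_lev .
  have split: "card {x\<in>Z. lev x \<le> k} = card {x\<in>Z. lev x < k} + card {x\<in>Z. lev x = k}"
    if "Z \<in> W" for Z k
  proof -
    have "{x\<in>Z. lev x \<le> k} = {x\<in>Z. lev x < k} \<union> {x\<in>Z. lev x = k}" by auto
    moreover have "finite {x\<in>Z. lev x < k}" "finite {x\<in>Z. lev x = k}"
      using finle[OF that, of k] by (auto intro: finite_subset[rotated])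
    ultimately show ?thesis by (simp add: card_Un_disjoint disjoint_iff)
  qed
  have clt: "card {x\<in>X. lev x < k} = card {y\<in>Y. lev y < k}" for k
  proof (cases k)
    case 0 then show ?thesis by simp
  next
    case (Suc j)
    then have "{x\<in>X. lev x < k} = {x\<in>X. lev x \<le> j}" "{y\<in>Y. lev y < k} = {y\<in>Y. lev y \<le> j}"
      by auto
    then show ?thesis using cle[of j] by simp
  qed
  have cL: "card (LX k) = card (LY k)" for k
    using split[OF X, of k] split[OF Y, of k] cle[of k] clt[of k] unfolding LX_def LY_def by simp
  have fLX: "finite (LX k)" for k
    using finle[OF X, of k] unfolding LX_def by (auto intro: finite_subset[rotated])
  have fLY: "finite (LY k)" for k
    using finle[OF Y, of k] unfolding LY_def by (auto intro: finite_subset[rotated])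
  have "\<forall>k. \<exists>b. bij_betw b (LX k) (LY k)"
    using finite_same_card_bij[OF fLX fLY cL] by blast
  then obtain b where b: "\<And>k. bij_betw (b k) (LX k) (LY k)" by metis
  define \<tau> where "\<tau> x = b (lev x) x" for x
  have tx: "x \<in> X \<Longrightarrow> \<tau> x \<in> Y \<and> lev (\<tau> x) = lev x" for x
    using bij_betw_apply[OF b, of x "lev x"] unfolding \<tau>_def LX_def LY_def by auto
  have img: "\<tau> ` X \<subseteq> Y" using tx by blast
  have inj: "inj_on \<tau> X"
  proof (rule inj_onI)
    fix x y assume x: "x \<in> X" and y: "y \<in> X" and eq: "\<tau> x = \<tau> y"
    have l: "lev x = lev y" using tx[OF x] tx[OF y] eq by metis
    have "x \<in> LX (lev x)" "y \<in> LX (lev x)" using x y l unfolding LX_def by auto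
    moreover have "b (lev x) x = b (lev x) y" using eq l unfolding \<tau>_def by simp
    ultimately show "x = y" using bij_betw_imp_inj_on[OF b] by (metis inj_onD)
  qed
  have tr: "\<tau> ` restr X (G m) = restr Y (G m)" for m
  proof
    show "\<tau> ` restr X (G m) \<subseteq> restr Y (G m)"
      unfolding restr_lev using tx by auto
    show "restr Y (G m) \<subseteq> \<tau> ` restr X (G m)"
    proof
      fix y assume "y \<in> restr Y (G m)"
      then have y: "y \<in> Y" "lev y \<le> m" unfolding restr_lev by auto
      then have "y \<in> LY (lev y)" unfolding LY_def by simp
      then obtain x where x: "x \<in> LX (lev y)" "b (lev y) x = y"
        using bij_betw_imp_surj_on[OF b] by (metis imageE)
      then have "x \<in> X" "lev x = lev y" unfolding LX_def by auto
      then show "y \<in> \<tau> ` restr X (G m)" using x y unfolding restr_lev \<tau>_def by force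
    qed
  qed
  have "{F\<in>Fin. \<tau> ` restr X F = restr Y F} \<in> U"
    using U_range[OF rG, of "\<lambda>F. \<tau> ` restr X F = restr Y F"] tr by simp
  then have "U_congruence U X Y \<tau>" unfolding U_congruence_def using img inj by simp
  then show "\<exists>\<tau>. U_congruence U X Y \<tau>" by blast
qed

end

context UF
begin

lemma chain_card:
  fixes G :: "nat \<Rightarrow> nat set"
  assumes ch: "\<forall>n m. n < m \<longrightarrow> G n \<subset> G m" and fG: "\<And>n. finite (G n)"
  assumes "n < m"
  shows "card (G n) < card (G m)"
proof -
  have "G n \<subset> G m" using ch assms(3) by blast
  then show ?thesis by (rule psubset_card_mono[OF fG])
qed

lemma iso: "\<exists>\<Phi>. ultrapowers_iso U (sigmaU U) \<Phi>"
proof -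
  obtain G :: "nat \<Rightarrow> nat set" where GQ: "\<And>n. G n \<in> Fin"
    and ch: "\<forall>n m. n < m \<longrightarrow> G n \<subset> G m" and rG: "range G \<in> U"
    and cov: "\<And>S. finite S \<Longrightarrow> \<exists>n. S \<subseteq> G n"
    by (rule good_chain[OF Fin_in], rule that)
  have fG: "finite (G n)" for n using GQ[of n] by (simp add: Fin_def)
  have inj: "inj_on card (range G)"
  proof (rule inj_onI)
    fix F F' assume "F \<in> range G" "F' \<in> range G" "card F = card F'"
    then obtain n m where nm: "F = G n" "F' = G m" "card (G n) = card (G m)" by auto
    have "n = m"
    proof (rule ccontr)
      assume "n \<noteq> m"
      then have "n < m \<or> m < n" by arith
      then show False using chain_card[OF ch fG, of n m, OF _] chain_card[OF ch fG, of m n, OF _] nm(3) by auto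
    qed
    then show "F = F'" using nm by simp
  qed
  define g where "g k = inv_into (range G) card k" for k
  have gG: "g (card F) = F" if "F \<in> range G" for F
    unfolding g_def using inv_into_f_f[OF inj that] .
  have transfer: "{n. \<phi> (g n)} \<in> sigmaU U \<longleftrightarrow> {F\<in>Fin. \<phi> F} \<in> U" for \<phi>
  proof -
    have s: "{n. \<phi> (g n)} \<in> sigmaU U \<longleftrightarrow> {F\<in>Fin. \<phi> (g (card F))} \<in> U"
      unfolding sigmaU_def by simp
    have agree: "F \<in> range G \<Longrightarrow> \<phi> (g (card F)) = \<phi> F" for F using gG by simp
    show ?thesis
    proof
      assume "{n. \<phi> (g n)} \<in> sigmaU U"
      then have "{F\<in>Fin. \<phi> (g (card F))} \<inter> range G \<in> U" using s U_int[OF _ rG] by simp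
      then show "{F\<in>Fin. \<phi> F} \<in> U" by (rule U_coll) (use agree in auto)
    next
      assume "{F\<in>Fin. \<phi> F} \<in> U"
      then have "{F\<in>Fin. \<phi> F} \<inter> range G \<in> U" using U_int[OF _ rG] by simp
      then have "{F\<in>Fin. \<phi> (g (card F))} \<in> U" by (rule U_coll) (use agree in auto)
      then show "{n. \<phi> (g n)} \<in> sigmaU U" using s by simp
    qed
  qed
  define \<Phi> where "\<Phi> f = (\<lambda>n. f (g n))" for f :: "nat set \<Rightarrow> nat"
  have univ: "UNIV \<in> sigmaU U" unfolding sigmaU_def using Fin_in by simp
  have "ultrapowers_iso U (sigmaU U) \<Phi>"
    unfolding ultrapowers_iso_def
  proof (intro conjI allI)
    fix f f' :: "nat set \<Rightarrow> nat"
    show "upw_eq U f f' = upwN_eq (sigmaU U) (\<Phi> f) (\<Phi> f')"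
      unfolding upw_eq_def upwN_eq_def \<Phi>_def using transfer[of "\<lambda>F. f F = f' F"] by simp
    show "upw_le U f f' = upwN_le (sigmaU U) (\<Phi> f) (\<Phi> f')"
      unfolding upw_le_def upwN_le_def \<Phi>_def using transfer[of "\<lambda>F. f F \<le> f' F"] by simp
    show "upwN_eq (sigmaU U) (\<Phi> (\<lambda>F. f F + f' F)) (\<lambda>n. \<Phi> f n + \<Phi> f' n)"
      unfolding upwN_eq_def \<Phi>_def using univ by simp
    show "upwN_eq (sigmaU U) (\<Phi> (\<lambda>F. f F * f' F)) (\<lambda>n. \<Phi> f n * \<Phi> f' n)"
      unfolding upwN_eq_def \<Phi>_def using univ by simp
  next
    fix h :: "nat \<Rightarrow> nat"
    have "{F\<in>Fin. card F \<in> {n. h (card (g n)) = h n}} \<in> U"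
      using rG by (rule U_coll) (use gG in auto)
    then have "upwN_eq (sigmaU U) (\<Phi> (\<lambda>F. h (card F))) h"
      unfolding upwN_eq_def \<Phi>_def sigmaU_def by simp
    then show "\<exists>f. upwN_eq (sigmaU U) (\<Phi> f) h" by blast
  qed
  then show ?thesis by blast
qed

lemma perm:
  "\<exists>\<pi>::nat \<Rightarrow> nat. bij \<pi> \<and>
     (\<forall>S\<in>gauge_ideal U. \<forall>k. \<exists>m. {0..k} \<subseteq> \<pi> ` {0..m} \<and> series_val S (xF (\<pi> ` {0..m})) = 0)"
proof -
  obtain G :: "nat \<Rightarrow> nat set" where GQ: "\<And>n. G n \<in> Fin"
    and ch: "\<forall>n m. n < m \<longrightarrow> G n \<subset> G m" and rG: "range G \<in> U"
    and cov: "\<And>S. finite S \<Longrightarrow> \<exists>n. S \<subseteq> G n"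
    by (rule good_chain[OF Fin_in], rule that)
  have fG: "finite (G n)" for n using GQ[of n] by (simp add: Fin_def)
  define Ps where "Ps = rec_nat (sorted_list_of_set (G 0))
     (\<lambda>n l. l @ sorted_list_of_set (G (Suc n) - G n))"
  have Ps0: "Ps 0 = sorted_list_of_set (G 0)" unfolding Ps_def by simp
  have PsS: "Ps (Suc n) = Ps n @ sorted_list_of_set (G (Suc n) - G n)" for n
    unfolding Ps_def by simp
  have Pprop: "set (Ps n) = G n \<and> distinct (Ps n)" for n
  proof (induction n)
    case 0 then show ?case using fG[of 0] by (simp add: Ps0)
  next
    case (Suc n)
    have "G n \<subseteq> G (Suc n)" using ch by blast
    then show ?case using Suc fG[of "Suc n"] by (auto simp: PsS)
  qed
  have len: "length (Ps n) = card (G n)" for n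
    using Pprop[of n] distinct_card by metis
  have pre: "\<exists>ys. Ps m = Ps n @ ys" if "n \<le> m" for n m
    using that
  proof (induction m)
    case 0 then show ?case by simp
  next
    case (Suc m)
    show ?case
    proof (cases "n = Suc m")
      case False
      then have "n \<le> m" using Suc by simp
      then show ?thesis using Suc.IH by (auto simp: PsS)
    qed simp
  qed
  have cardG: "n \<le> card (G n)" for n
  proof (induction n)
    case (Suc n)
    have "card (G n) < card (G (Suc n))" using chain_card[OF ch fG, of n "Suc n"] by simp
    then show ?case using Suc by simp
  qed simp
  define \<pi> where "\<pi> k = Ps (Suc k) ! k" for k
  have piP: "\<pi> k = Ps n ! k" if "k < length (Ps n)" for k n
  proof -
    define M where "M = max n (Suc k)"
    obtain ys where ys: "Ps M = Ps n @ ys" using pre[of n M] unfolding M_def by auto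
    obtain zs where zs: "Ps M = Ps (Suc k) @ zs" using pre[of "Suc k" M] unfolding M_def by auto
    have kl: "k < length (Ps (Suc k))" using cardG[of "Suc k"] len[of "Suc k"] by simp
    have "Ps M ! k = Ps n ! k" using ys that by (simp add: nth_append)
    moreover have "Ps M ! k = Ps (Suc k) ! k" using zs kl by (simp add: nth_append)
    ultimately show ?thesis unfolding \<pi>_def by simp
  qed
  have piG: "\<pi> ` {..<card (G n)} = G n" for n
  proof -
    have "\<pi> ` {..<card (G n)} = (\<lambda>k. Ps n ! k) ` {..<length (Ps n)}"
      by (rule image_cong) (use piP len[of n] in auto)
    also have "\<dots> = set (Ps n)" by (auto simp: set_conv_nth)
    finally show ?thesis using Pprop by simp
  qed
  have "inj \<pi>"
  proof (rule injI)
    fix i j assume eq: "\<pi> i = \<pi> j"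
    define n where "n = Suc (max i j)"
    have il: "i < length (Ps n)" "j < length (Ps n)"
      using cardG[of n] len[of n] unfolding n_def by auto
    then have "Ps n ! i = Ps n ! j" using eq piP by metis
    then show "i = j" using Pprop[of n] il by (simp add: nth_eq_iff_index_eq)
  qed
  moreover have "surj \<pi>"
  proof -
    have "y \<in> range \<pi>" for y
    proof -
      obtain n where "{y} \<subseteq> G n" using cov[of "{y}"] by auto
      then show ?thesis using piG[of n] by blast
    qed
    then show ?thesis by blast
  qed
  ultimately have bij: "bij \<pi>" by (simp add: bij_def)
  have gauge: "\<exists>m. {0..k} \<subseteq> \<pi> ` {0..m} \<and> series_val S (xF (\<pi> ` {0..m})) = 0"
    if S: "S \<in> gauge_ideal U" for S k
  proof -
    have Z: "{F\<in>Fin. series_val S (xF F) = 0} \<in> U" using S unfolding gauge_ideal_def by simp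
    have "{F\<in>Fin. series_val S (xF F) = 0 \<and> {0..k} \<subseteq> F} \<inter> range G \<in> U"
      using U_int[OF U_and[OF Z fine_sub[of "{0..k}"]] rG] by simp
    then obtain F where F: "F \<in> range G" "series_val S (xF F) = 0" "{0..k} \<subseteq> F"
      using U_nonempty by blast
    then obtain n where n: "F = G n" by auto
    have "card (G n) \<noteq> 0" using F n fG[of n] by auto
    then have "{0..card (G n) - 1} = {..<card (G n)}" by auto
    then have "\<pi> ` {0..card (G n) - 1} = G n" using piG by simp
    then show ?thesis using F n by metis
  qed
  show ?thesis using bij gauge by blast
qed

end

theorem corollary3p2:
  fixes U :: "nat set set set"
  assumes "ultrafilter_on Fin U" and "fine U" and "ramsey U"
  shows "equinumerosity (U_eq U) \<and> natural (U_eq U)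
     \<and> (\<exists>\<Phi>. ultrapowers_iso U (sigmaU U) \<Phi>)
     \<and> (\<forall>X\<in>W. \<forall>Y\<in>W. U_eq U X Y \<longleftrightarrow> (\<exists>\<tau>. U_congruence U X Y \<tau>))
     \<and> (\<exists>\<pi>::nat \<Rightarrow> nat. bij \<pi> \<and>
          (\<forall>S\<in>gauge_ideal U. \<forall>k. \<exists>m.
              {0..k} \<subseteq> \<pi> ` {0..m} \<and> series_val S (xF (\<pi> ` {0..m})) = 0))"
proof -
  interpret UF U using assms by unfold_locales
  show ?thesis using equi natural_U iso cong_iff perm by blast
qed

end
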